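(* Assume the setting and the algorithm FDGM-AA described in the context, with $\beta\in(0,1/L)$. Then for every $k\ge0$, $\sum_{i\in\mathcal V}w_i^{k}=0$ and $$ D(\mathbf w^{k+1})-D(\mathbf w^k)\le-\theta_1\sum_{\{i,j\}\in\mathcal E^k}h_{ij}^k\big\|\nabla d_i(w_i^k)-\nabla d_j(w_j^k)\big\|^2, $$ where $\theta_1=\min\{\beta(1-\beta L),c_1\}$. In particular $\{D(\mathbf w^k)\}_{k\ge0}$ is non-increasing.
   Context: Setting. Let $n,d\ge 1$ be integers and $\mathcal V=\{1,\dots,n\}$. For each $i\in\mathcal V$, $f_i:\mathbb R^d\to\mathbb R\cup\{+\infty\}$ is proper, lower semicontinuous and $\mu$-strongly convex for some $\mu>0$ (i.e. $f_i-\frac{\mu}{2}\|\cdot\|^2$ is convex), and the interior of $\bigcap_{i\in\mathcal V}\mathrm{dom} f_i$ is nonempty. Let $d_i(w)=\sup_{x\in\mathbb R^d}\{\langle w,x\rangle-f_i(x)\}$ be the convex conjugate of $f_i$; it is differentiable with $L$-Lipschitz gradient where $L=1/\mu$, and $\nabla d_i(w)=\arg\max_x\{\langle w,x\rangle-f_i(x)\}$. For $\mathbf w=(w_1,\dots,w_n)\in(\mathbb R^d)^n$ put $D(\mathbf w)=\sum_{i\in\mathcal V}d_i(w_i)$. Networks. $\mathcal G^k=(\mathcal V,\mathcal E^k)$, $k\ge0$, is a sequence of undirected graphs; $\mathcal N_i^k=\{j:\{i,j\}\in\mathcal E^k\}$. For each $\{i,j\}\in\mathcal E^k$ a weight $h_{ij}^k=h_{ji}^k>0$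 is given, with $\underline h:=\inf_{k\ge0}\min_{\{i,j\}\in\mathcal E^k}h_{ij}^k>0$ and $\sum_{j\in\mathcal N_i^k}h_{ij}^k\le 1$ for all $i,k$. Algorithm FDGM-AA. Parameters: step-size $\beta>0$, constants $c_1,c_2>0$, integer memory $m\ge1$. Initial point $w_1^0,\dots,w_n^0\in\mathbb R^d$ with $\sum_i w_i^0=0$. At iteration $k\ge0$, for each edge $\{i,j\}\in\mathcal E^k$: let $\mathcal I_{ij}^k=\mathcal I_{ji}^k$ be the set of the $\min\{m,N\}$ largest indices $t\le k$ with $\{i,j\}\in\mathcal E^t$, where $N$ is the number of such $t$ (so $k\in\mathcal I_{ij}^k$). Let $W_{ij}^k$ and $D_{ij}^k$ be the $d\times|\mathcal I_{ij}^k|$ matrices with columns $w_i^t$ and $\nabla d_i(w_i^t)$, $t\in\mathcal I_{ij}^k$, and define $W_{ji}^k$, $D_{ji}^k$ analogously with $w_j^t$, $\nabla d_j(w_j^t)$. Let $(\alpha_{ij}^k,\alpha_{ji}^k)$ be any minimizer of $\|D_{ij}^k\alpha_{ij}-D_{ji}^k\alpha_{ji}\|^2$ subject to $W_{ij}^k\alpha_{ij}+W_{ji}^k\alpha_{ji}=w_i^k+w_j^k$, $\mathbf 1^T\alpha_{ij}=1$, $\mathbf 1^T\alpha_{ji}=1$. Set $\tilde w_{ij}=W_{ij}^k\alpha_{ij}^k$, $\tilde w_{ji}=W_{ji}^k\alpha_{ji}^k$, $\bar w_{ij}=\tilde w_{ij}-\beta(D_{ij}^k\alpha_{ij}^k-D_{ji}^k\alpha_{ji}^k)$,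 $\bar w_{ji}=\tilde w_{ji}-\beta(D_{ji}^k\alpha_{ji}^k-D_{ij}^k\alpha_{ij}^k)$. Let $g=\nabla d_i(w_i^k)-\nabla d_j(w_j^k)$ and $\rho=\min\{-c_1\|g\|^2,\,-c_2(\|\bar w_{ij}-w_i^k\|^2+\|\bar w_{ji}-w_j^k\|^2)\}$. Safe-guard test (one of the following two, fixed for the whole run): (S1) $d_i(\bar w_{ij})+d_j(\bar w_{ji})-d_i(w_i^k)-d_j(w_j^k)\le\rho$; or (S2) $\langle\nabla d_i(w_i^k),\bar w_{ij}-w_i^k\rangle+\frac L2\|\bar w_{ij}-w_i^k\|^2+\langle\nabla d_j(w_j^k),\bar w_{ji}-w_j^k\rangle+\frac L2\|\bar w_{ji}-w_j^k\|^2\le\rho$. If the test holds, set $(w_{ij}^{k+\frac12},w_{ji}^{k+\frac12})=(\bar w_{ij},\bar w_{ji})$; otherwise set $w_{ij}^{k+\frac12}=w_i^k-\beta g$, $w_{ji}^{k+\frac12}=w_j^k+\beta g$. Finally, for every $i\in\mathcal V$, $w_i^{k+1}=(1-\sum_{j\in\mathcal N_i^k}h_{ij}^k)w_i^k+\sum_{j\in\mathcal N_i^k}h_{ij}^k w_{ij}^{k+\frac12}$. Write $\mathbf w^k=(w_1^k,\dots,w_n^k)$ and $x_i^k=\nabla d_i(w_i^k)$. *)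

theory Defs
  imports "HOL-Analysis.Analysis"
begin

text \<open>Functions R^d -> R \<union> {+\<infinity>} are modelled as maps into ereal that never take the value -\<infinity>.\<close>

definition ext_proper :: "('a \<Rightarrow> ereal) \<Rightarrow> bool" where
  "ext_proper f \<longleftrightarrow> (\<forall>x. f x \<noteq> -\<infinity>) \<and> (\<exists>x. f x \<noteq> \<infinity>)"

definition ext_lsc :: "('a::topological_space \<Rightarrow> ereal) \<Rightarrow> bool" where
  "ext_lsc f \<longleftrightarrow> (\<forall>c. closed {x. f x \<le> c})"

definition ext_convex :: "('a::real_vector \<Rightarrow> ereal) \<Rightarrow> bool" where
  "ext_convex g \<longleftrightarrow> (\<forall>x y t. 0 < t \<and> t < 1 \<longrightarrow>
       g ((1 - t) *\<^sub>R x + t *\<^sub>R y) \<le> ereal (1 - t) * g x + ereal t * g y)"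

definition strongly_convex :: "real \<Rightarrow> ('a::real_normed_vector \<Rightarrow> ereal) \<Rightarrow> bool" where
  "strongly_convex \<mu> f \<longleftrightarrow> ext_convex (\<lambda>x. f x - ereal (\<mu> / 2 * (norm x)\<^sup>2))"

definition edom :: "('a \<Rightarrow> ereal) \<Rightarrow> 'a set" where
  "edom f = {x. f x < \<infinity>}"

text \<open>Convex conjugate d(w) = sup_x <w,x> - f(x) (real-valued in the setting of the paper).\<close>
definition conj :: "('a::real_inner \<Rightarrow> ereal) \<Rightarrow> 'a \<Rightarrow> real" where
  "conj f w = real_of_ereal (SUP x. ereal (w \<bullet> x) - f x)"

text \<open>Gradient of the conjugate: the (unique) maximiser of <w,x> - f(x).\<close>
definition conj_grad :: "('a::real_inner \<Rightarrow> ereal) \<Rightarrow> 'a \<Rightarrow> 'a" where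
  "conj_grad f w = (THE x. \<forall>y. ereal (w \<bullet> y) - f y \<le> ereal (w \<bullet> x) - f x)"

text \<open>Memory index set I_ij^k: the min{m,N} largest times t \<le> k at which {i,j} is an edge.\<close>
definition mem_idx :: "(nat \<Rightarrow> nat set set) \<Rightarrow> nat \<Rightarrow> nat \<Rightarrow> nat \<Rightarrow> nat \<Rightarrow> nat set" where
  "mem_idx E m k i j = {t. t \<le> k \<and> {i, j} \<in> E t \<and>
        card {s. t < s \<and> s \<le> k \<and> {i, j} \<in> E s} < m}"

definition comb_w :: "(nat \<Rightarrow> nat \<Rightarrow> 'a::real_vector) \<Rightarrow> nat set \<Rightarrow> nat \<Rightarrow> (nat \<Rightarrow> real) \<Rightarrow> 'a" where
  "comb_w w I i a = (\<Sum>t\<in>I. a t *\<^sub>R w t i)"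

definition comb_g :: "(nat \<Rightarrow> 'a::real_inner \<Rightarrow> ereal) \<Rightarrow> (nat \<Rightarrow> nat \<Rightarrow> 'a) \<Rightarrow> nat set \<Rightarrow> nat \<Rightarrow> (nat \<Rightarrow> real) \<Rightarrow> 'a" where
  "comb_g f w I i a = (\<Sum>t\<in>I. a t *\<^sub>R conj_grad (f i) (w t i))"

definition aa_feasible where
  "aa_feasible E m w k i j a b \<longleftrightarrow>
     (let I = mem_idx E m k i j in
       comb_w w I i a + comb_w w I j b = w k i + w k j \<and>
       (\<Sum>t\<in>I. a t) = 1 \<and> (\<Sum>t\<in>I. b t) = 1)"

definition aa_obj where
  "aa_obj f E m w k i j a b =
     (let I = mem_idx E m k i j in (norm (comb_g f w I i a - comb_g f w I j b))\<^sup>2)"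

definition aa_minimizer where
  "aa_minimizer f E m w k i j a b \<longleftrightarrow>
     aa_feasible E m w k i j a b \<and>
     (\<forall>a' b'. aa_feasible E m w k i j a' b' \<longrightarrow>
        aa_obj f E m w k i j a b \<le> aa_obj f E m w k i j a' b')"

definition wbar where
  "wbar f E m \<beta> w alpha k i j =
     (let I = mem_idx E m k i j in
       comb_w w I i (alpha k i j)
       - \<beta> *\<^sub>R (comb_g f w I i (alpha k i j) - comb_g f w I j (alpha k j i)))"

definition rho where
  "rho f E m \<beta> c1 c2 w alpha k i j =
     min (- c1 * (norm (conj_grad (f i) (w k i) - conj_grad (f j) (w k j)))\<^sup>2)
         (- c2 * ((norm (wbar f E m \<beta> w alpha k i j - w k i))\<^sup>2
                 + (norm (wbar f E m \<beta> w alpha k j i - w k j))\<^sup>2))"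

text \<open>Safeguard test; S1 = True selects (S1), S1 = False selects (S2).\<close>
definition safeguard where
  "safeguard S1 L f E m \<beta> c1 c2 w alpha k i j \<longleftrightarrow>
     (let bi = wbar f E m \<beta> w alpha k i j; bj = wbar f E m \<beta> w alpha k j i;
          r = rho f E m \<beta> c1 c2 w alpha k i j in
      if S1 then
        conj (f i) bi + conj (f j) bj - conj (f i) (w k i) - conj (f j) (w k j) \<le> r
      else
        conj_grad (f i) (w k i) \<bullet> (bi - w k i) + L / 2 * (norm (bi - w k i))\<^sup>2
        + conj_grad (f j) (w k j) \<bullet> (bj - w k j) + L / 2 * (norm (bj - w k j))\<^sup>2 \<le> r)"

definition half_step where
  "half_step S1 L f E m \<beta> c1 c2 w alpha k i j =
     (if safeguard S1 L f E m \<beta> c1 c2 w alpha k i j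
      then wbar f E m \<beta> w alpha k i j
      else w k i - \<beta> *\<^sub>R (conj_grad (f i) (w k i) - conj_grad (f j) (w k j)))"

definition nbrs :: "(nat \<Rightarrow> nat set set) \<Rightarrow> nat \<Rightarrow> nat \<Rightarrow> nat set" where
  "nbrs E k i = {j. {i, j} \<in> E k}"

definition Dual :: "nat \<Rightarrow> (nat \<Rightarrow> 'a::real_inner \<Rightarrow> ereal) \<Rightarrow> (nat \<Rightarrow> 'a) \<Rightarrow> real" where
  "Dual n f v = (\<Sum>i\<in>{1..n}. conj (f i) (v i))"

end

theory Submission
  imports Defs
begin


lemma norm_comb:
  fixes x y :: "'a::real_inner"
  shows "(1-t) * (norm x)^2 + t*(norm y)^2 - (norm ((1-t)*\<^sub>R x + t*\<^sub>R y))^2 = t*(1-t)*(norm (x-y))^2"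
  unfolding power2_norm_eq_inner
  by (simp add: inner_diff_left inner_diff_right inner_commute algebra_simps power2_eq_square)

lemma quad_bound:
  fixes a b K R :: real
  assumes "a > 0" "R \<ge> 0" "b \<ge> 0" "a * R^2 - b * R \<le> K"
  shows "R \<le> (b + \<bar>K\<bar>) / a + 1"
proof (rule ccontr)
  assume "\<not> ?thesis"
  hence h: "R > (b + \<bar>K\<bar>) / a + 1" by simp
  hence h2: "a * R > b + \<bar>K\<bar> + a" using assms(1) by (simp add: field_simps)
  have "(b + \<bar>K\<bar>) / a \<ge> 0" using assms by simp
  hence r1: "R \<ge> 1" using h by linarith
  have "R*(a*R-b) \<ge> 1*(a*R-b)" using r1 h2 assms by (intro mult_right_mono) auto
  hence "a*R-b \<le> R*(a*R-b)" by simp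
  also have "R*(a*R-b) = a * R^2 - b*R" by (simp add: power2_eq_square algebra_simps)
  also have "\<dots> \<le> \<bar>K\<bar>" using assms(4) by linarith
  finally show False using h2 assms(1) by linarith
qed

context
  fixes f :: "'a::euclidean_space \<Rightarrow> ereal" and \<mu> :: real
  assumes fprop: "ext_proper f" and flsc: "ext_lsc f" and fsc: "strongly_convex \<mu> f" and mu: "\<mu> > 0"
begin

lemma f_not_minf: "f x \<noteq> -\<infinity>"
  using fprop unfolding ext_proper_def by auto

lemma f_fin: "\<exists>x a. f x = ereal a"
proof -
  obtain x where "f x \<noteq> \<infinity>" using fprop unfolding ext_proper_def by auto
  then show ?thesis using f_not_minf[of x] by (cases "f x") auto
qed

lemma sc_real:
  assumes fx: "f x = ereal a" and fy: "f y = ereal b" and t: "0 < t" "t < 1"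
  shows "\<exists>c. f ((1-t)*\<^sub>R x + t*\<^sub>R y) = ereal c \<and>
           c \<le> (1-t)*a + t*b - \<mu>/2*(t*(1-t)*(norm(x-y))^2)"
proof -
  define z where "z = (1-t)*\<^sub>R x + t*\<^sub>R y"
  have "f z - ereal(\<mu>/2*(norm z)^2) \<le> ereal(1-t) * (f x - ereal(\<mu>/2*(norm x)^2)) + ereal t * (f y - ereal(\<mu>/2*(norm y)^2))"
    using fsc t unfolding strongly_convex_def ext_convex_def z_def by blast
  also have "\<dots> = ereal ((1-t)*(a - \<mu>/2*(norm x)^2) + t*(b - \<mu>/2*(norm y)^2))" using fx fy by simp
  finally have le: "f z - ereal(\<mu>/2*(norm z)^2) \<le> ereal ((1-t)*(a - \<mu>/2*(norm x)^2) + t*(b - \<mu>/2*(norm y)^2))" .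
  have "f z \<noteq> \<infinity>" using le by auto
  then obtain c where c: "f z = ereal c" using f_not_minf[of z] by (cases "f z") auto
  with le have le2: "c - \<mu>/2*(norm z)^2 \<le> (1-t)*(a - \<mu>/2*(norm x)^2) + t*(b - \<mu>/2*(norm y)^2)" by simp
  have id: "\<mu>/2*((1-t) * (norm x)^2 + t*(norm y)^2 - (norm z)^2) = \<mu>/2*(t*(1-t)*(norm (x-y))^2)"
    unfolding z_def norm_comb ..
  have nz: "(norm z)^2 = (1-t) * (norm x)^2 + t*(norm y)^2 - t*(1-t)*(norm (x-y))^2"
    using norm_comb[of t x y] unfolding z_def by linarith
  have "c \<le> (1-t)*(a - \<mu>/2*(norm x)^2) + t*(b - \<mu>/2*(norm y)^2) + \<mu>/2*((1-t) * (norm x)^2 + t*(norm y)^2 - t*(1-t)*(norm (x-y))^2)"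
    using le2 unfolding nz by linarith
  also have "\<dots> = (1-t)*a + t*b - \<mu>/2*(t*(1-t)*(norm(x-y))^2)"
    by (simp add: field_simps)
  finally have "c \<le> (1-t)*a + t*b - \<mu>/2*(t*(1-t)*(norm(x-y))^2)" .
  then show ?thesis using c z_def by blast
qed


lemma lsc_local:
  assumes "f x0 = ereal a"
  shows "\<exists>r>0. \<forall>y. dist y x0 < r \<longrightarrow> f y > ereal (a-1)"
proof -
  have "closed {x. f x \<le> ereal (a-1)}" using flsc unfolding ext_lsc_def by blast
  hence "open (-{x. f x \<le> ereal (a-1)})" by (simp add: closed_def)
  moreover have "x0 \<in> -{x. f x \<le> ereal (a-1)}" using assms by simp
  ultimately obtain r where "r>0" "ball x0 r \<subseteq> -{x. f x \<le> ereal (a-1)}"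
    using open_contains_ball by blast
  then show ?thesis by (auto simp: dist_commute subset_iff not_le)
qed

lemma coercive:
  assumes fx0: "f x0 = ereal a" and r: "r > 0" and loc: "\<forall>y. dist y x0 < r \<longrightarrow> f y > ereal (a-1)"
    and fx: "f x = ereal v"
  shows "v \<ge> a - 1 - (2/r)*norm(x-x0) + \<mu>/4*(norm(x-x0))^2 - \<mu>/4*r^2"
proof (cases "norm (x - x0) < r")
  case True
  have "f x > ereal (a-1)" using loc True by (simp add: dist_norm)
  hence v: "v > a - 1" using fx by simp
  have "(2/r)*norm(x-x0) \<ge> 0" using r by simp
  moreover have "(norm(x-x0))^2 \<le> r^2" using True by (intro power_mono) auto
  hence "\<mu>/4*(norm(x-x0))^2 \<le> \<mu>/4*r^2" using mu by simp
  ultimately show ?thesis using v by linarith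
next
  case False
  define R where "R = norm (x - x0)"
  have Rr: "R \<ge> r" using False R_def by simp
  hence Rpos: "R > 0" using r by simp
  define t where "t = r / (2*R)"
  have t0: "t > 0" using r Rpos t_def by simp
  have th: "t \<le> 1/2" using Rr r Rpos unfolding t_def by (simp add: field_simps)
  hence t1: "t < 1" by simp
  obtain c where c: "f ((1-t)*\<^sub>R x0 + t*\<^sub>R x) = ereal c"
      "c \<le> (1-t)*a + t* v - \<mu>/2*(t*(1-t)*(norm(x0-x))^2)"
    using sc_real[OF fx0 fx t0 t1] by blast
  have "dist ((1-t)*\<^sub>R x0 + t*\<^sub>R x) x0 = t * R"
  proof -
    have "(1-t)*\<^sub>R x0 + t*\<^sub>R x - x0 = t *\<^sub>R (x - x0)" by (simp add: algebra_simps)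
    thus ?thesis unfolding dist_norm R_def using t0 by simp
  qed
  also have "t * R = r/2" unfolding t_def using Rpos by simp
  finally have "f ((1-t)*\<^sub>R x0 + t*\<^sub>R x) > ereal (a-1)" using loc r by simp
  hence ca: "c > a - 1" using c by simp
  have nx: "norm(x0-x) = R" unfolding R_def by (simp add: norm_minus_commute)
  have eq: "(1-t)*a + t* v - \<mu>/2*(t*(1-t)*R^2) = a - t*a + t* v - t*(\<mu>/2*(1-t)*R^2)"
    by (simp add: field_simps)
  have h1: "t* v > t*a - 1 + t*(\<mu>/2*(1-t)*R^2)" using c(2)[unfolded nx] ca eq by linarith
  have "t*(v - (a - 1/t + \<mu>/2*(1-t)*R^2)) = t* v - (t*a - 1 + t*(\<mu>/2*(1-t)*R^2))"
    using t0 by (simp add: algebra_simps)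
  hence "t*(v - (a - 1/t + \<mu>/2*(1-t)*R^2)) > 0" using h1 by simp
  hence h2: "v > a - 1/t + \<mu>/2*(1-t)*R^2" using t0 by (simp add: zero_less_mult_iff)
  have "1/t = (2/r)*R" unfolding t_def using r Rpos by simp
  moreover have "\<mu>/2*(1-t)*R^2 \<ge> \<mu>/4*R^2"
  proof -
    have "\<mu>/2*(1-t)*R^2 - \<mu>/4*R^2 = \<mu>/2*R^2*(1/2 - t)" by (simp add: field_simps)
    moreover have "\<mu>/2*R^2*(1/2 - t) \<ge> 0" using mu th by simp
    ultimately show ?thesis by linarith
  qed
  moreover have "\<mu>/4*r^2 \<ge> 0" using mu by simp
  ultimately show ?thesis using h2 unfolding R_def by linarith
qed

lemma sub_bounded: "bounded {x. f x \<le> ereal (c + w \<bullet> x)}"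
proof -
  obtain x0 a where fx0: "f x0 = ereal a" using f_fin by blast
  obtain r where r: "r > 0" "\<forall>y. dist y x0 < r \<longrightarrow> f y > ereal (a-1)"
    using lsc_local[OF fx0] by blast
  define K where "K = c + norm w * norm x0 - a + 1 + \<mu>/4*r^2"
  define B where "B = ((2/r + norm w) + \<bar>K\<bar>) / (\<mu>/4) + 1"
  have "{x. f x \<le> ereal (c + w \<bullet> x)} \<subseteq> cball x0 B"
  proof
    fix x assume "x \<in> {x. f x \<le> ereal (c + w \<bullet> x)}"
    hence le: "f x \<le> ereal (c + w \<bullet> x)" by simp
    then obtain v where fx: "f x = ereal v" using f_not_minf[of x] by (cases "f x") auto
    with le have v: "v \<le> c + w \<bullet> x" by simp
    define R where "R = norm (x - x0)"
    have "w \<bullet> x \<le> norm w * norm x" by (rule norm_cauchy_schwarz)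
    moreover have "norm x \<le> norm x0 + R" unfolding R_def by (metis add.commute norm_triangle_sub)
    hence "norm w * norm x \<le> norm w * (norm x0 + R)" by (simp add: mult_left_mono)
    ultimately have wx: "w \<bullet> x \<le> norm w * norm x0 + norm w * R" by (simp add: algebra_simps)
    have co: "v \<ge> a - 1 - (2/r)*R + \<mu>/4*R^2 - \<mu>/4*r^2"
      using coercive[OF fx0 r(1) r(2) fx] unfolding R_def .
    have "\<mu>/4 * R^2 - (2/r + norm w) * R \<le> K"
      using v wx co unfolding K_def by (simp add: algebra_simps)
    hence "R \<le> B" unfolding B_def
      by (intro quad_bound) (use mu r in \<open>auto simp: R_def\<close>)
    thus "x \<in> cball x0 B" unfolding R_def by (simp add: dist_norm norm_minus_commute)
  qed
  thus ?thesis using bounded_cball bounded_subset by blast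
qed

lemma sub_closed: "closed {x. f x \<le> ereal (c + w \<bullet> x)}"
proof -
  have "open (-{x. f x \<le> ereal (c + w \<bullet> x)})"
  proof (subst open_subopen, intro ballI)
    fix x assume "x \<in> -{x. f x \<le> ereal (c + w \<bullet> x)}"
    hence "ereal (c + w \<bullet> x) < f x" by (simp add: not_le)
    then obtain b where b: "ereal (c + w \<bullet> x) < ereal b" "ereal b < f x"
      using ereal_dense2 by blast
    define \<delta> where "\<delta> = b - (c + w \<bullet> x)"
    have d: "\<delta> > 0" using b(1) \<delta>_def by simp
    define T where "T = {y. ereal b < f y} \<inter> {y. w \<bullet> y < w \<bullet> x + \<delta>}"
    have "closed {y. f y \<le> ereal b}" using flsc unfolding ext_lsc_def by blast
    hence o1: "open {y. ereal b < f y}"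
      by (metis (no_types, lifting) Collect_cong Compl_eq closed_def mem_Collect_eq not_le)
    have o2: "open {y. w \<bullet> y < w \<bullet> x + \<delta>}"
      by (intro open_Collect_less continuous_intros)
    have "open T" unfolding T_def using o1 o2 by auto
    moreover have "x \<in> T" unfolding T_def using b d by simp
    moreover have "T \<subseteq> -{x. f x \<le> ereal (c + w \<bullet> x)}"
    proof
      fix y assume "y \<in> T"
      hence y: "ereal b < f y" "w \<bullet> y < w \<bullet> x + \<delta>" unfolding T_def by auto
      have "ereal (c + w \<bullet> y) < ereal b" using y(2) \<delta>_def by simp
      hence "ereal (c + w \<bullet> y) < f y" using y(1) by (rule less_trans)
      then show "y \<in> -{x. f x \<le> ereal (c + w \<bullet> x)}" by (simp add: not_le)
    qed
    ultimately show "\<exists>T. open T \<and> x \<in> T \<and> T \<subseteq> -{x. f x \<le> ereal (c + w \<bullet> x)}" by blast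
  qed
  thus ?thesis by (simp add: closed_def)
qed


lemma min_exists: "\<exists>x. f x \<noteq> \<infinity> \<and> (\<forall>y. ereal (w \<bullet> y) - f y \<le> ereal (w \<bullet> x) - f x)"
proof -
  define S where "S = (\<lambda>c. {x. f x \<le> ereal (c + w \<bullet> x)})"
  obtain x0 a where fx0: "f x0 = ereal a" using f_fin by blast
  define c0 where "c0 = a - w \<bullet> x0"
  have x0S: "x0 \<in> S c0" unfolding S_def c0_def using fx0 by simp
  have mono: "S c \<subseteq> S c'" if "c \<le> c'" for c c'
  proof
    fix z assume "z \<in> S c"
    hence "f z \<le> ereal (c + w \<bullet> z)" unfolding S_def by simp
    also have "\<dots> \<le> ereal (c' + w \<bullet> z)" using that by simp
    finally show "z \<in> S c'" unfolding S_def by simp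
  qed
  have comp: "compact (S c0)" unfolding S_def
    using sub_bounded sub_closed compact_eq_bounded_closed by blast
  have "S c0 \<inter> \<Inter>(S ` {c. S c \<noteq> {}}) \<noteq> {}"
  proof (rule compact_imp_fip[OF comp])
    show "closed T" if "T \<in> S ` {c. S c \<noteq> {}}" for T
      using that sub_closed unfolding S_def by blast
  next
    fix F' assume F': "finite F'" "F' \<subseteq> S ` {c. S c \<noteq> {}}"
    then obtain C where C: "C \<subseteq> {c. S c \<noteq> {}}" "finite C" "F' = S ` C"
      using finite_subset_image by metis
    define cm where "cm = Min (insert c0 C)"
    have cmin: "cm \<in> insert c0 C" unfolding cm_def using C(2) by (intro Min_in) auto
    have "S cm \<noteq> {}" using cmin C(1) x0S by auto
    then obtain z where z: "z \<in> S cm" by blast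
    have "z \<in> S c" if "c \<in> insert c0 C" for c
      using mono[of cm c] z that C(2) unfolding cm_def by auto
    thus "S c0 \<inter> \<Inter> F' \<noteq> {}" using C(3) by blast
  qed
  then obtain x where x: "x \<in> S c0" "\<And>c. S c \<noteq> {} \<Longrightarrow> x \<in> S c" by blast
  from x(1) have "f x \<le> ereal (c0 + w \<bullet> x)" unfolding S_def by simp
  then obtain vx where vx: "f x = ereal vx" using f_not_minf[of x] by (cases "f x") auto
  have "ereal (w \<bullet> y) - f y \<le> ereal (w \<bullet> x) - f x" for y
  proof (cases "f y")
    case (real vy)
    have "y \<in> S (vy - w \<bullet> y)" unfolding S_def using real by simp
    hence "x \<in> S (vy - w \<bullet> y)" using x(2) by blast
    hence "vx \<le> vy - w \<bullet> y + w \<bullet> x" unfolding S_def using vx by simp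
    thus ?thesis using real vx by simp
  next
    case PInf thus ?thesis by simp
  next
    case MInf thus ?thesis using f_not_minf by simp
  qed
  hence "\<forall>y. ereal (w \<bullet> y) - f y \<le> ereal (w \<bullet> x) - f x" by blast
  moreover have "f x \<noteq> \<infinity>" using vx by simp
  ultimately show ?thesis by blast
qed

lemma qgrowth:
  assumes fp: "f p = ereal vp" and pmax: "\<forall>y. ereal (w \<bullet> y) - f y \<le> ereal (w \<bullet> p) - f p"
    and fy: "f y = ereal vy"
  shows "w \<bullet> y - vy \<le> (w \<bullet> p - vp) - \<mu>/2*(norm(y-p))^2"
proof -
  define D where "D = (norm (y-p))^2"
  define pp where "pp = vp - w \<bullet> p"
  define py where "py = vy - w \<bullet> y"
  have claim: "pp \<le> py - \<mu>/2*D + \<mu>/2*(t*D)" if t: "0<t" "t<1" for t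
  proof -
    obtain cz where cz: "f ((1-t)*\<^sub>R p + t*\<^sub>R y) = ereal cz"
      "cz \<le> (1-t)* vp + t* vy - \<mu>/2*(t*(1-t)*(norm(p-y))^2)"
      using sc_real[OF fp fy t] by blast
    have npy: "(norm(p-y))^2 = D" unfolding D_def by (simp add: norm_minus_commute)
    have "ereal (w \<bullet> ((1-t)*\<^sub>R p + t*\<^sub>R y)) - f ((1-t)*\<^sub>R p + t*\<^sub>R y) \<le> ereal (w \<bullet> p) - f p"
      using pmax by blast
    hence "w \<bullet> ((1-t)*\<^sub>R p + t*\<^sub>R y) - cz \<le> w \<bullet> p - vp" using cz(1) fp by simp
    moreover have "w \<bullet> ((1-t)*\<^sub>R p + t*\<^sub>R y) = (1-t)*(w \<bullet> p) + t*(w \<bullet> y)"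
      by (simp add: inner_add_right)
    ultimately have h: "(1-t)*(w \<bullet> p) + t*(w \<bullet> y) - ((1-t)* vp + t* vy - \<mu>/2*(t*(1-t)*D)) \<le> w \<bullet> p - vp"
      using cz(2)[unfolded npy] by linarith
    have "t * (py - \<mu>/2*D + \<mu>/2*(t*D) - pp) = (w \<bullet> p - vp) - ((1-t)*(w \<bullet> p) + t*(w \<bullet> y) - ((1-t)* vp + t* vy - \<mu>/2*(t*(1-t)*D)))"
      unfolding pp_def py_def by (simp add: field_simps)
    hence "t * (py - \<mu>/2*D + \<mu>/2*(t*D) - pp) \<ge> 0" using h by linarith
    hence "py - \<mu>/2*D + \<mu>/2*(t*D) - pp \<ge> 0" using t by (simp add: zero_le_mult_iff)
    thus ?thesis by linarith
  qed
  have "pp \<le> py - \<mu>/2*D"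
  proof (rule ccontr)
    assume "\<not> ?thesis"
    hence dpos: "pp - (py - \<mu>/2*D) > 0" by simp
    define \<delta> where "\<delta> = pp - (py - \<mu>/2*D)"
    show False
    proof (cases "D = 0")
      case True
      thus False using claim[of "1/2"] dpos by simp
    next
      case False
      hence Dp: "D > 0" unfolding D_def by simp
      define t where "t = min (1/2) (\<delta>/(\<mu>*D))"
      have t0: "t > 0" unfolding t_def \<delta>_def using dpos mu Dp by simp
      have t1: "t < 1" unfolding t_def by simp
      have "t \<le> \<delta>/(\<mu>*D)" unfolding t_def by simp
      hence "\<mu>/2*(t*D) \<le> \<mu>/2*((\<delta>/(\<mu>*D))*D)" using mu Dp by (intro mult_left_mono mult_right_mono) auto
      also have "\<dots> = \<delta>/2" using mu Dp by (simp add: field_simps)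
      finally have "\<mu>/2*(t*D) \<le> \<delta>/2" .
      thus False using claim[OF t0 t1] dpos \<delta>_def by linarith
    qed
  qed
  thus ?thesis unfolding pp_def py_def D_def by linarith
qed

lemma max_finite:
  assumes "\<forall>y. ereal (w \<bullet> y) - f y \<le> ereal (w \<bullet> p) - f p"
  shows "f p \<noteq> \<infinity>"
proof
  assume "f p = \<infinity>"
  obtain x0 a where "f x0 = ereal a" using f_fin by blast
  with assms have "ereal (w \<bullet> x0) - ereal a \<le> ereal (w \<bullet> p) - f p" by metis
  with \<open>f p = \<infinity>\<close> show False by simp
qed

lemma grad_max:
  "\<exists>v. f (conj_grad f w) = ereal v \<and> conj f w = w \<bullet> conj_grad f w - v \<and>
     (\<forall>y. ereal (w \<bullet> y) - f y \<le> ereal (w \<bullet> conj_grad f w) - f (conj_grad f w))"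
proof -
  obtain p where p: "f p \<noteq> \<infinity>" "\<forall>y. ereal (w \<bullet> y) - f y \<le> ereal (w \<bullet> p) - f p"
    using min_exists by blast
  obtain vp where vp: "f p = ereal vp" using p(1) f_not_minf[of p] by (cases "f p") auto
  have g: "conj_grad f w = p" unfolding conj_grad_def
  proof (rule the_equality)
    show "\<forall>y. ereal (w \<bullet> y) - f y \<le> ereal (w \<bullet> p) - f p" by (rule p(2))
  next
    fix q assume q: "\<forall>y. ereal (w \<bullet> y) - f y \<le> ereal (w \<bullet> q) - f q"
    obtain vq where vq: "f q = ereal vq" using max_finite[OF q] f_not_minf[of q] by (cases "f q") auto
    have "w \<bullet> q - vq \<le> (w \<bullet> p - vp) - \<mu>/2*(norm(q-p))^2" using qgrowth[OF vp p(2) vq] .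
    moreover have "ereal (w \<bullet> p) - f p \<le> ereal (w \<bullet> q) - f q" using q by blast
    hence "w \<bullet> p - vp \<le> w \<bullet> q - vq" using vp vq by simp
    ultimately have "\<mu>/2*(norm(q-p))^2 \<le> 0" by linarith
    hence "(norm(q-p))^2 \<le> 0" using mu by (simp add: mult_le_0_iff)
    thus "q = p" by simp
  qed
  have "(SUP x. ereal (w \<bullet> x) - f x) = ereal (w \<bullet> p) - f p"
    by (rule antisym) (use p(2) in \<open>auto intro: SUP_least SUP_upper2\<close>)
  hence "conj f w = w \<bullet> p - vp" unfolding conj_def using vp by simp
  thus ?thesis using g vp p(2) by auto
qed

lemma conj_ge: assumes "f y = ereal vy" shows "w \<bullet> y - vy \<le> conj f w"
proof -
  obtain v where v: "f (conj_grad f w) = ereal v" "conj f w = w \<bullet> conj_grad f w - v"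
    "\<forall>y. ereal (w \<bullet> y) - f y \<le> ereal (w \<bullet> conj_grad f w) - f (conj_grad f w)"
    using grad_max by blast
  have "ereal (w \<bullet> y) - f y \<le> ereal (w \<bullet> conj_grad f w) - f (conj_grad f w)" using v(3) by blast
  thus ?thesis using v(1,2) assms by simp
qed


lemma young_ineq: "u \<bullet> z - \<mu>/2*(norm z)^2 \<le> (1/\<mu>)/2*(norm u)^2"
proof -
  have "0 \<le> (norm (\<mu> *\<^sub>R z - u))^2" by simp
  also have "(norm (\<mu> *\<^sub>R z - u))^2 = \<mu>*\<mu>*(norm z)^2 - 2*\<mu>*(u \<bullet> z) + (norm u)^2"
    unfolding power2_norm_eq_inner
    by (simp add: inner_diff_left inner_diff_right inner_commute algebra_simps)
  finally have h: "0 \<le> \<mu>*\<mu>*(norm z)^2 - 2*\<mu>*(u \<bullet> z) + (norm u)^2" .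
  have "(2*\<mu>) * ((1/\<mu>)/2*(norm u)^2 - (u \<bullet> z - \<mu>/2*(norm z)^2)) = \<mu>*\<mu>*(norm z)^2 - 2*\<mu>*(u \<bullet> z) + (norm u)^2"
    using mu by (simp add: field_simps)
  hence "(2*\<mu>) * ((1/\<mu>)/2*(norm u)^2 - (u \<bullet> z - \<mu>/2*(norm z)^2)) \<ge> 0" using h by simp
  hence "(1/\<mu>)/2*(norm u)^2 - (u \<bullet> z - \<mu>/2*(norm z)^2) \<ge> 0" using mu by (simp add: zero_le_mult_iff)
  thus ?thesis by simp
qed

lemma descent: "conj f v \<le> conj f w + conj_grad f w \<bullet> (v - w) + (1/\<mu>)/2*(norm (v - w))^2"
proof -
  obtain vp where p: "f (conj_grad f w) = ereal vp" "conj f w = w \<bullet> conj_grad f w - vp"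
    "\<forall>y. ereal (w \<bullet> y) - f y \<le> ereal (w \<bullet> conj_grad f w) - f (conj_grad f w)"
    using grad_max by blast
  obtain vx where x: "f (conj_grad f v) = ereal vx" "conj f v = v \<bullet> conj_grad f v - vx"
    using grad_max by blast
  define P where "P = conj_grad f w"
  define X where "X = conj_grad f v"
  have q: "w \<bullet> X - vx \<le> (w \<bullet> P - vp) - \<mu>/2*(norm(X-P))^2"
    using qgrowth[OF p(1) p(3) x(1)] unfolding P_def X_def .
  have y: "(v - w) \<bullet> (X - P) - \<mu>/2*(norm (X-P))^2 \<le> (1/\<mu>)/2*(norm (v-w))^2"
    by (rule young_ineq)
  have "v \<bullet> X = w \<bullet> X + (v - w) \<bullet> P + (v - w) \<bullet> (X - P)"
    by (simp add: inner_diff_left inner_diff_right)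
  hence "conj f v = w \<bullet> X - vx + (v - w) \<bullet> P + (v - w) \<bullet> (X - P)"
    using x(2) unfolding X_def by simp
  also have "\<dots> \<le> conj f w + P \<bullet> (v - w) + (1/\<mu>)/2*(norm (v - w))^2"
    using q y p(2) unfolding P_def by (simp add: inner_commute)
  finally show ?thesis unfolding P_def .
qed

lemma jensen:
  fixes J :: "'b set" and lam :: "'b \<Rightarrow> real" and vv :: "'b \<Rightarrow> 'a"
  assumes J: "finite J" and lam: "\<forall>j\<in>J. lam j \<ge> 0" and S: "sum lam J \<le> 1"
  shows "conj f ((1 - sum lam J) *\<^sub>R a + (\<Sum>j\<in>J. lam j *\<^sub>R vv j))
         \<le> (1 - sum lam J) * conj f a + (\<Sum>j\<in>J. lam j * conj f (vv j))"
proof -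
  define c where "c = (1 - sum lam J) *\<^sub>R a + (\<Sum>j\<in>J. lam j *\<^sub>R vv j)"
  obtain vx where x: "f (conj_grad f c) = ereal vx" "conj f c = c \<bullet> conj_grad f c - vx"
    using grad_max by blast
  define X where "X = conj_grad f c"
  have cx: "c \<bullet> X = (1 - sum lam J) * (a \<bullet> X) + (\<Sum>j\<in>J. lam j * (vv j \<bullet> X))"
    unfolding c_def by (simp add: inner_add_left inner_sum_left)
  have ga: "a \<bullet> X - vx \<le> conj f a" using conj_ge[OF x(1)] unfolding X_def .
  have gj: "vv j \<bullet> X - vx \<le> conj f (vv j)" for j using conj_ge[OF x(1)] unfolding X_def .
  have "(1 - sum lam J) * (a \<bullet> X - vx) \<le> (1 - sum lam J) * conj f a"
    using ga S by (intro mult_left_mono) auto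
  moreover have "(\<Sum>j\<in>J. lam j * (vv j \<bullet> X - vx)) \<le> (\<Sum>j\<in>J. lam j * conj f (vv j))"
    using gj lam by (intro sum_mono mult_left_mono) auto
  moreover have "(\<Sum>j\<in>J. lam j * (vv j \<bullet> X - vx)) = (\<Sum>j\<in>J. lam j * (vv j \<bullet> X)) - sum lam J * vx"
    by (simp add: right_diff_distrib sum_subtractf sum_distrib_right)
  moreover have "conj f c = (1 - sum lam J) * (a \<bullet> X - vx) + ((\<Sum>j\<in>J. lam j * (vv j \<bullet> X)) - sum lam J * vx)"
    using x(2) cx unfolding X_def by (simp add: algebra_simps)
  ultimately show ?thesis unfolding c_def by linarith
qed

end



lemma edge_prop:
  assumes edges: "\<forall>k. \<forall>e\<in>E k. e \<subseteq> {1..n} \<and> card e = 2" and e: "{i, j} \<in> E k"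
  shows "i \<in> {1..n} \<and> j \<in> {1..n} \<and> i \<noteq> j"
proof -
  have s: "{i,j} \<subseteq> {1..n}" and c: "card {i,j} = 2" using edges e by blast+
  have "i \<noteq> j" proof
    assume "i = j" hence "card {i,j} = 1" by simp
    thus False using c by simp
  qed
  thus ?thesis using s by blast
qed

lemma pair_sum:
  fixes F :: "nat \<Rightarrow> nat \<Rightarrow> 'b::comm_monoid_add"
  assumes edges: "\<forall>k. \<forall>e\<in>E k. e \<subseteq> {1..n} \<and> card e = 2"
  shows "(\<Sum>i\<in>{1..n}. \<Sum>j\<in>nbrs E k i. F i j)
       = (\<Sum>(i, j)\<in>{(i, j). i \<in> {1..n} \<and> j \<in> {1..n} \<and> i < j \<and> {i, j} \<in> E k}. F i j + F j i)"
proof -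
  define P where "P = {(i, j). i \<in> {1..n} \<and> j \<in> {1..n} \<and> i < j \<and> {i, j} \<in> E k}"
  define sw where "sw = (\<lambda>(i::nat, j::nat). (j, i))"
  have nb: "nbrs E k i \<subseteq> {1..n}" for i
    using edge_prop[OF edges] unfolding nbrs_def by blast
  have fin_nb: "finite (nbrs E k i)" for i using nb finite_subset by blast
  have finP: "finite P" unfolding P_def
    by (rule finite_subset[of _ "{1..n} \<times> {1..n}"]) auto
  have A_eq: "Sigma {1..n} (nbrs E k) = P \<union> sw ` P"
  proof (rule set_eqI, rule iffI)
    fix x assume "x \<in> Sigma {1..n} (nbrs E k)"
    then obtain i j where x: "x = (i,j)" "i \<in> {1..n}" "{i,j} \<in> E k" unfolding nbrs_def by auto
    have ij: "j \<in> {1..n}" "i \<noteq> j" using edge_prop[OF edges x(3)] by auto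
    show "x \<in> P \<union> sw ` P"
    proof (cases "i < j")
      case True thus ?thesis using x ij unfolding P_def by auto
    next
      case False
      hence "(j, i) \<in> P" using x ij unfolding P_def by (auto simp: insert_commute)
      hence "sw (j,i) \<in> sw ` P" by blast
      thus ?thesis using x unfolding sw_def by auto
    qed
  next
    fix x assume "x \<in> P \<union> sw ` P"
    thus "x \<in> Sigma {1..n} (nbrs E k)" unfolding P_def sw_def nbrs_def
      by (auto simp: insert_commute)
  qed
  have disj: "P \<inter> sw ` P = {}" unfolding P_def sw_def by auto
  have inj: "inj_on sw P" unfolding sw_def inj_on_def by auto
  have "(\<Sum>i\<in>{1..n}. \<Sum>j\<in>nbrs E k i. F i j) = (\<Sum>x\<in>Sigma {1..n} (nbrs E k). case x of (i,j) \<Rightarrow> F i j)"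
    by (rule sum.Sigma) (use fin_nb in auto)
  also have "\<dots> = (\<Sum>x\<in>P. case x of (i,j) \<Rightarrow> F i j) + (\<Sum>x\<in>sw ` P. case x of (i,j) \<Rightarrow> F i j)"
    unfolding A_eq using finP disj by (intro sum.union_disjoint) auto
  also have "(\<Sum>x\<in>sw ` P. case x of (i,j) \<Rightarrow> F i j) = (\<Sum>x\<in>P. case x of (i,j) \<Rightarrow> F j i)"
  proof -
    have "(\<Sum>x\<in>sw ` P. case x of (i,j) \<Rightarrow> F i j) = (\<Sum>x\<in>P. (\<lambda>x. case x of (i,j) \<Rightarrow> F i j) (sw x))"
      using sum.reindex[OF inj, of "\<lambda>x. case x of (i,j) \<Rightarrow> F i j"] by (simp only: comp_def)
    also have "\<dots> = (\<Sum>x\<in>P. case x of (i,j) \<Rightarrow> F j i)"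
      by (rule sum.cong) (auto simp: sw_def split: prod.splits)
    finally show ?thesis .
  qed
  also have "(\<Sum>x\<in>P. case x of (i,j) \<Rightarrow> F i j) + (\<Sum>x\<in>P. case x of (i,j) \<Rightarrow> F j i)
      = (\<Sum>x\<in>P. case x of (i,j) \<Rightarrow> F i j + F j i)"
    by (simp add: sum.distrib[symmetric] case_prod_beta)
  finally show ?thesis unfolding P_def .
qed

lemma mem_idx_sym: "mem_idx E m k j i = mem_idx E m k i j"
proof -
  have "{j,i} = {i,j}" by (rule insert_commute)
  thus ?thesis unfolding mem_idx_def by simp
qed

lemma rho_sym: "rho f E m \<beta> c1 c2 w alpha k j i = rho f E m \<beta> c1 c2 w alpha k i j"
  unfolding rho_def
  by (simp only: norm_minus_commute[of "conj_grad (f j) (w k j)"] add.commute[of "(norm (wbar f E m \<beta> w alpha k j i - w k j))\<^sup>2"])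

lemma safeguard_sym: "safeguard S1 L f E m \<beta> c1 c2 w alpha k j i = safeguard S1 L f E m \<beta> c1 c2 w alpha k i j"
proof -
  have r: "rho f E m \<beta> c1 c2 w alpha k j i = rho f E m \<beta> c1 c2 w alpha k i j" by (rule rho_sym)
  show ?thesis unfolding safeguard_def Let_def r by (simp add: algebra_simps)
qed

lemma wbar_sum:
  assumes "aa_feasible E m w k i j (alpha k i j) (alpha k j i)"
  shows "wbar f E m \<beta> w alpha k i j + wbar f E m \<beta> w alpha k j i = w k i + w k j"
  using assms unfolding wbar_def aa_feasible_def Let_def mem_idx_sym[of E m k j i]
  by (simp add: algebra_simps)

lemma half_sum:
  assumes "aa_feasible E m w k i j (alpha k i j) (alpha k j i)"
  shows "half_step S1 L f E m \<beta> c1 c2 w alpha k i j + half_step S1 L f E m \<beta> c1 c2 w alpha k j i = w k i + w k j"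
  using wbar_sum[of E m w k i j alpha f \<beta>, OF assms] unfolding half_step_def safeguard_sym[of S1 L f E m \<beta> c1 c2 w alpha k j i]
  by (simp add: algebra_simps)



theorem mainTheorem3:
  fixes n :: nat and \<mu> L \<beta> c1 c2 :: real and m :: nat and S1 :: bool
    and f :: "nat \<Rightarrow> 'a::euclidean_space \<Rightarrow> ereal"
    and E :: "nat \<Rightarrow> nat set set"
    and h :: "nat \<Rightarrow> nat \<Rightarrow> nat \<Rightarrow> real"
    and w :: "nat \<Rightarrow> nat \<Rightarrow> 'a"
    and alpha :: "nat \<Rightarrow> nat \<Rightarrow> nat \<Rightarrow> nat \<Rightarrow> real"
  assumes n_pos: "n \<ge> 1"
    and mu_pos: "\<mu> > 0"
    and f_proper: "\<forall>i\<in>{1..n}. ext_proper (f i)"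
    and f_lsc: "\<forall>i\<in>{1..n}. ext_lsc (f i)"
    and f_sc: "\<forall>i\<in>{1..n}. strongly_convex \<mu> (f i)"
    and dom_int: "interior (\<Inter>i\<in>{1..n}. edom (f i)) \<noteq> {}"
    and L_def: "L = 1 / \<mu>"
    and edges: "\<forall>k. \<forall>e\<in>E k. e \<subseteq> {1..n} \<and> card e = 2"
    and h_sym: "\<forall>k i j. {i, j} \<in> E k \<longrightarrow> h k i j = h k j i"
    and h_low: "\<exists>hl > 0. \<forall>k i j. {i, j} \<in> E k \<longrightarrow> h k i j \<ge> hl"
    and h_sum: "\<forall>k. \<forall>i\<in>{1..n}. (\<Sum>j\<in>nbrs E k i. h k i j) \<le> 1"
    and beta: "0 < \<beta>" "\<beta> < 1 / L"
    and c_pos: "c1 > 0" "c2 > 0"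
    and m_pos: "m \<ge> 1"
    and init: "(\<Sum>i\<in>{1..n}. w 0 i) = 0"
    and aa: "\<forall>k i j. {i, j} \<in> E k \<longrightarrow>
               aa_minimizer f E m w k i j (alpha k i j) (alpha k j i)"
    and update: "\<forall>k. \<forall>i\<in>{1..n}. w (Suc k) i =
               (1 - (\<Sum>j\<in>nbrs E k i. h k i j)) *\<^sub>R w k i
               + (\<Sum>j\<in>nbrs E k i. h k i j *\<^sub>R half_step S1 L f E m \<beta> c1 c2 w alpha k i j)"
  shows "(\<forall>k. (\<Sum>i\<in>{1..n}. w k i) = 0 \<and>
            Dual n f (w (Suc k)) - Dual n f (w k)
              \<le> - min (\<beta> * (1 - \<beta> * L)) c1 *
                 (\<Sum>(i, j)\<in>{(i, j). i \<in> {1..n} \<and> j \<in> {1..n} \<and> i < j \<and> {i, j} \<in> E k}.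
                    h k i j * (norm (conj_grad (f i) (w k i) - conj_grad (f j) (w k j)))\<^sup>2))
         \<and> antimono (\<lambda>k. Dual n f (w k))"
proof -
  have Lpos: "L > 0" using L_def mu_pos by simp
  have bL: "\<beta> * L < 1" using beta(2) Lpos by (simp add: field_simps)
  define \<theta> where "\<theta> = min (\<beta> * (1 - \<beta> * L)) c1"
  have th_nonneg: "\<theta> \<ge> 0" unfolding \<theta>_def using beta(1) bL c_pos by simp
  have th1: "\<theta> \<le> \<beta> * (1 - \<beta> * L)" "\<theta> \<le> c1" unfolding \<theta>_def by auto
  have hpos: "h k i j \<ge> 0" if "{i,j} \<in> E k" for k i j
  proof -
    obtain hl where "hl > 0" "\<forall>k i j. {i, j} \<in> E k \<longrightarrow> h k i j \<ge> hl" using h_low by blast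
    thus ?thesis using that by force
  qed
  have fp: "ext_proper (f i)" "ext_lsc (f i)" "strongly_convex \<mu> (f i)" if "i \<in> {1..n}" for i
    using that f_proper f_lsc f_sc by auto
  have desc: "conj (f i) v \<le> conj (f i) u + conj_grad (f i) u \<bullet> (v - u) + L/2*(norm(v-u))^2"
    if "i \<in> {1..n}" for i u v
    using descent[OF fp(1)[OF that] fp(2)[OF that] fp(3)[OF that] mu_pos, of v u] L_def by simp
  have nb: "nbrs E k i \<subseteq> {1..n}" for k i
    using edge_prop[OF edges] unfolding nbrs_def by blast
  have fin_nb: "finite (nbrs E k i)" for k i using nb finite_subset by blast
  define hs where "hs = half_step S1 L f E m \<beta> c1 c2 w alpha"
  define g where "g = (\<lambda>k i j. conj_grad (f i) (w k i) - conj_grad (f j) (w k j))"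
  have feas: "aa_feasible E m w k i j (alpha k i j) (alpha k j i)" if "{i,j} \<in> E k" for k i j
    using aa that unfolding aa_minimizer_def by blast
  have hsum: "hs k i j + hs k j i = w k i + w k j" if "{i,j} \<in> E k" for k i j
    unfolding hs_def by (rule half_sum[of E m w k i j alpha, OF feas[OF that]])
  have hsymE: "h k j i = h k i j" if "{i,j} \<in> E k" for k i j using h_sym that by metis
  have edge: "conj (f i) (hs k i j) - conj (f i) (w k i) + (conj (f j) (hs k j i) - conj (f j) (w k j))
       \<le> - \<theta> * (norm (g k i j))^2" if e: "{i,j} \<in> E k" for k i j
  proof -
    have ij: "i \<in> {1..n}" "j \<in> {1..n}" using edge_prop[OF edges e] by auto
    define X where "X = conj_grad (f i) (w k i)"
    define Y where "Y = conj_grad (f j) (w k j)"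
    define G where "G = X - Y"
    have gG: "g k i j = G" unfolding g_def G_def X_def Y_def by simp
    have n0: "(norm G)^2 \<ge> 0" by simp
    show ?thesis
    proof (cases "safeguard S1 L f E m \<beta> c1 c2 w alpha k i j")
      case True
      have sj: "safeguard S1 L f E m \<beta> c1 c2 w alpha k j i" using True safeguard_sym by metis
      define bi where "bi = wbar f E m \<beta> w alpha k i j"
      define bj where "bj = wbar f E m \<beta> w alpha k j i"
      have hsi: "hs k i j = bi" using True unfolding hs_def half_step_def bi_def by simp
      have hsj: "hs k j i = bj" using sj unfolding hs_def half_step_def bj_def by simp
      have rho_le: "rho f E m \<beta> c1 c2 w alpha k i j \<le> - c1 * (norm G)^2"
        unfolding rho_def G_def X_def Y_def by simp
      have main: "conj (f i) bi - conj (f i) (w k i) + (conj (f j) bj - conj (f j) (w k j))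
           \<le> rho f E m \<beta> c1 c2 w alpha k i j"
      proof (cases S1)
        case True
        thus ?thesis using \<open>safeguard S1 L f E m \<beta> c1 c2 w alpha k i j\<close>
          unfolding safeguard_def Let_def bi_def bj_def by simp
      next
        case False
        hence s2: "X \<bullet> (bi - w k i) + L / 2 * (norm (bi - w k i))\<^sup>2
          + Y \<bullet> (bj - w k j) + L / 2 * (norm (bj - w k j))\<^sup>2 \<le> rho f E m \<beta> c1 c2 w alpha k i j"
          using \<open>safeguard S1 L f E m \<beta> c1 c2 w alpha k i j\<close>
          unfolding safeguard_def Let_def bi_def bj_def X_def Y_def by simp
        have "conj (f i) bi \<le> conj (f i) (w k i) + X \<bullet> (bi - w k i) + L/2*(norm(bi - w k i))^2"
          using desc[OF ij(1)] unfolding X_def by blast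
        moreover have "conj (f j) bj \<le> conj (f j) (w k j) + Y \<bullet> (bj - w k j) + L/2*(norm(bj - w k j))^2"
          using desc[OF ij(2)] unfolding Y_def by blast
        ultimately show ?thesis using s2 by linarith
      qed
      have "- c1 * (norm G)^2 \<le> - \<theta> * (norm G)^2" using th1(2) n0 by (intro mult_right_mono) auto
      thus ?thesis unfolding hsi hsj gG using main rho_le by linarith
    next
      case False
      have sj: "\<not> safeguard S1 L f E m \<beta> c1 c2 w alpha k j i" using False safeguard_sym by metis
      have hsi: "hs k i j = w k i - \<beta> *\<^sub>R G" using False unfolding hs_def half_step_def G_def X_def Y_def by simp
      have hsj: "hs k j i = w k j + \<beta> *\<^sub>R G" using sj unfolding hs_def half_step_def G_def X_def Y_def
        by (simp add: algebra_simps)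
      have nG: "(\<bar>\<beta>\<bar> * norm G)^2 = \<beta>^2 * (norm G)^2" using beta(1) by (simp add: power_mult_distrib)
      have d1: "conj (f i) (w k i - \<beta> *\<^sub>R G) \<le> conj (f i) (w k i) - \<beta> * (X \<bullet> G) + L/2*(\<beta>^2 * (norm G)^2)"
        using desc[OF ij(1), where u="w k i" and v="w k i - \<beta> *\<^sub>R G"] nG unfolding X_def by simp
      have d2: "conj (f j) (w k j + \<beta> *\<^sub>R G) \<le> conj (f j) (w k j) + \<beta> * (Y \<bullet> G) + L/2*(\<beta>^2 * (norm G)^2)"
        using desc[OF ij(2), where u="w k j" and v="w k j + \<beta> *\<^sub>R G"] nG unfolding Y_def by simp
      have xy: "X \<bullet> G - Y \<bullet> G = (norm G)^2" unfolding G_def power2_norm_eq_inner by (simp add: inner_diff_left)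
      have "- \<beta> * (X \<bullet> G) + \<beta> * (Y \<bullet> G) + L*(\<beta>^2 * (norm G)^2) = - (\<beta> * (1 - \<beta> * L)) * (norm G)^2"
        using xy by (simp add: algebra_simps power2_eq_square)
      moreover have "- (\<beta> * (1 - \<beta> * L)) * (norm G)^2 \<le> - \<theta> * (norm G)^2"
        using th1(1) n0 by (intro mult_right_mono) auto
      ultimately show ?thesis unfolding hsi hsj gG using d1 d2 by linarith
    qed
  qed
  have step_form: "w (Suc k) i = w k i + (\<Sum>j\<in>nbrs E k i. h k i j *\<^sub>R (hs k i j - w k i))"
    if "i \<in> {1..n}" for k i
  proof -
    have "w (Suc k) i = (1 - (\<Sum>j\<in>nbrs E k i. h k i j)) *\<^sub>R w k i + (\<Sum>j\<in>nbrs E k i. h k i j *\<^sub>R hs k i j)"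
      using update that unfolding hs_def by blast
    also have "\<dots> = w k i + (\<Sum>j\<in>nbrs E k i. h k i j *\<^sub>R (hs k i j - w k i))"
      by (simp add: scaleR_diff_right sum_subtractf scaleR_left_diff_distrib scaleR_sum_left algebra_simps)
    finally show ?thesis .
  qed
  have mass: "(\<Sum>i\<in>{1..n}. w k i) = 0" for k
  proof (induction k)
    case 0 thus ?case using init by simp
  next
    case (Suc k)
    have "(\<Sum>i\<in>{1..n}. w (Suc k) i) = (\<Sum>i\<in>{1..n}. w k i) + (\<Sum>i\<in>{1..n}. \<Sum>j\<in>nbrs E k i. h k i j *\<^sub>R (hs k i j - w k i))"
      using step_form by (simp add: sum.distrib)
    also have "(\<Sum>i\<in>{1..n}. \<Sum>j\<in>nbrs E k i. h k i j *\<^sub>R (hs k i j - w k i))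
       = (\<Sum>(i, j)\<in>{(i, j). i \<in> {1..n} \<and> j \<in> {1..n} \<and> i < j \<and> {i, j} \<in> E k}.
            h k i j *\<^sub>R (hs k i j - w k i) + h k j i *\<^sub>R (hs k j i - w k j))"
      by (rule pair_sum[OF edges])
    also have "\<dots> = 0"
    proof (rule sum.neutral, clarify)
      fix i j assume "{i,j} \<in> E k"
      hence "hs k i j + hs k j i = w k i + w k j" "h k j i = h k i j" using hsum hsymE by auto
      thus "h k i j *\<^sub>R (hs k i j - w k i) + h k j i *\<^sub>R (hs k j i - w k j) = 0"
        by (metis (no_types, lifting) add_diff_add diff_self scaleR_right_diff_distrib scaleR_zero_right scaleR_right_distrib)
    qed
    finally show ?case using Suc.IH by simp
  qed
  define P where "P = (\<lambda>k. {(i, j). i \<in> {1..n} \<and> j \<in> {1..n} \<and> i < j \<and> {i, j} \<in> E k})"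
  have desc_k: "Dual n f (w (Suc k)) - Dual n f (w k)
      \<le> - \<theta> * (\<Sum>(i, j)\<in>P k. h k i j * (norm (g k i j))\<^sup>2)" for k
  proof -
    have per_i: "conj (f i) (w (Suc k) i) - conj (f i) (w k i)
        \<le> (\<Sum>j\<in>nbrs E k i. h k i j * (conj (f i) (hs k i j) - conj (f i) (w k i)))" if i: "i \<in> {1..n}" for i
    proof -
      have lam: "\<forall>j\<in>nbrs E k i. h k i j \<ge> 0" using hpos unfolding nbrs_def by blast
      have S: "sum (h k i) (nbrs E k i) \<le> 1" using h_sum i by blast
      have upd: "w (Suc k) i = (1 - sum (h k i) (nbrs E k i)) *\<^sub>R w k i + (\<Sum>j\<in>nbrs E k i. h k i j *\<^sub>R hs k i j)"
        using update i unfolding hs_def by blast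
      have "conj (f i) (w (Suc k) i) \<le> (1 - sum (h k i) (nbrs E k i)) * conj (f i) (w k i) + (\<Sum>j\<in>nbrs E k i. h k i j * conj (f i) (hs k i j))"
        unfolding upd by (rule jensen[OF fp(1)[OF i] fp(2)[OF i] fp(3)[OF i] mu_pos fin_nb lam S])
      moreover have "(\<Sum>j\<in>nbrs E k i. h k i j * (conj (f i) (hs k i j) - conj (f i) (w k i)))
          = (\<Sum>j\<in>nbrs E k i. h k i j * conj (f i) (hs k i j)) - sum (h k i) (nbrs E k i) * conj (f i) (w k i)"
        by (simp add: right_diff_distrib sum_subtractf sum_distrib_right)
      ultimately show ?thesis by (simp add: algebra_simps)
    qed
    have "Dual n f (w (Suc k)) - Dual n f (w k) = (\<Sum>i\<in>{1..n}. conj (f i) (w (Suc k) i) - conj (f i) (w k i))"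
      unfolding Dual_def by (simp add: sum_subtractf)
    also have "\<dots> \<le> (\<Sum>i\<in>{1..n}. \<Sum>j\<in>nbrs E k i. h k i j * (conj (f i) (hs k i j) - conj (f i) (w k i)))"
      by (rule sum_mono) (rule per_i)
    also have "\<dots> = (\<Sum>(i, j)\<in>P k. h k i j * (conj (f i) (hs k i j) - conj (f i) (w k i))
                  + h k j i * (conj (f j) (hs k j i) - conj (f j) (w k j)))"
      unfolding P_def by (rule pair_sum[OF edges])
    also have "\<dots> \<le> (\<Sum>(i, j)\<in>P k. - \<theta> * (h k i j * (norm (g k i j))\<^sup>2))"
    proof (rule sum_mono, clarify)
      fix i j assume "(i, j) \<in> P k"
      hence e: "{i,j} \<in> E k" unfolding P_def by auto
      have "h k i j * (conj (f i) (hs k i j) - conj (f i) (w k i))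
                  + h k j i * (conj (f j) (hs k j i) - conj (f j) (w k j))
            = h k i j * (conj (f i) (hs k i j) - conj (f i) (w k i) + (conj (f j) (hs k j i) - conj (f j) (w k j)))"
        using hsymE[OF e] by (simp add: distrib_left)
      also have "\<dots> \<le> h k i j * (- \<theta> * (norm (g k i j))^2)"
        using edge[OF e] hpos[OF e] by (intro mult_left_mono) auto
      finally show "h k i j * (conj (f i) (hs k i j) - conj (f i) (w k i))
                  + h k j i * (conj (f j) (hs k j i) - conj (f j) (w k j))
            \<le> - \<theta> * (h k i j * (norm (g k i j))\<^sup>2)" by (simp add: algebra_simps)
    qed
    also have "\<dots> = - \<theta> * (\<Sum>(i, j)\<in>P k. h k i j * (norm (g k i j))\<^sup>2)"
      by (simp add: sum_distrib_left case_prod_beta)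
    finally show ?thesis .
  qed
  have nonneg: "(\<Sum>(i, j)\<in>P k. h k i j * (norm (g k i j))\<^sup>2) \<ge> 0" for k
    by (rule sum_nonneg) (auto simp: P_def intro!: mult_nonneg_nonneg hpos)
  have anti: "antimono (\<lambda>k. Dual n f (w k))"
    unfolding antimono_iff_le_Suc
  proof
    fix k
    have "- \<theta> * (\<Sum>(i, j)\<in>P k. h k i j * (norm (g k i j))\<^sup>2) \<le> 0"
      using th_nonneg nonneg[of k] by (simp add: mult_nonneg_nonneg)
    thus "Dual n f (w (Suc k)) \<le> Dual n f (w k)" using desc_k[of k] by linarith
  qed
  show ?thesis using mass desc_k anti unfolding \<theta>_def P_def g_def by blast
qed

end
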